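(* Let $\lambda\in\Lambda$. If $W(\lambda)\neq\emptyset$, then $W(\lambda)=\widehat W$. Indeed, if $w_N\in W(\lambda)$ then $\underline L^*=\|w_N-w_0\|^2$ and $\widehat W=\{w\in W:H(w-w_N)=0\}=W(\lambda)$, where $H=2(I-\lambda\Delta)$. In particular, if $\lambda\in\Lambda^\circ$ and $w_N\in W(\lambda)$, then $w_N$ is the unique solution of the problem.
   Context: Regular dimension-reduced canonical form: let $q\ge1$, $\gamma_1>\dots>\gamma_q$ nonzero reals with $\gamma_1>0$, $\Gamma^*=\operatorname{diag}(\gamma_1,\dots,\gamma_q)$, $\delta=(\delta_1,\dots,\delta_q)^\top$ with all $\delta_i\ge0$, $k^*\in\mathbb{R}$, $\varepsilon\ge0$. Either ($m_0=0$) $\varepsilon=0$, the variable is $w=z\in\mathbb{R}^q$, $w_0=\delta$, $\Delta=\Gamma^*$, $d=0_q$; or ($m_0>0$) $\varepsilon>0$, $w=(y,z^\top)^\top\in\mathbb{R}^{q+1}$, $w_0=(0,\delta^\top)^\top$, $\Delta=\operatorname{diag}(0,\Gamma^* )$, $d=\varepsilon e_1$. The problem is to minimise $L^*(w)=\|w-w_0\|^2$ over $W=\{w:Q^*(w)=0\}$, $Q^*(w)=w^\top\Delta w+2d^\top w-k^*$, where $W\neq\emptyset$; $\underline L^*=\inf_WL^*$, $\widehat W=\{w\in W:L^*(w)=\underline L^*\}$. Normal equations: $(I-\lambda\Delta)w=w_0+\lambda d$. Admissible region: $\Lambda=(-\infty,\gamma_1^{-1}]$ if $\gamma_q>0$,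 $\Lambda=[\gamma_q^{-1},\gamma_1^{-1}]$ if $\gamma_q<0$; $\Lambda^\circ$ its interior. For $\lambda\in\Lambda$, $W_N(\lambda)$ is the set of solutions $w$ of the normal equations and $W(\lambda)=W\cap W_N(\lambda)$. *)

theory Defs
  imports "HOL-Analysis.Analysis"
begin

text \<open>Vectors of R^N are represented as functions nat => real vanishing at
indices >= N. Parameters gamma, delta are indexed 1..q as in the paper.
The case m0 = 0 corresponds to eps = 0 (N = q, coordinates z_1..z_q stored at
indices 0..q-1); the case m0 > 0 to eps > 0 (N = q+1, index 0 is y, index i is z_i).\<close>

definition dimN :: "nat \<Rightarrow> real \<Rightarrow> nat" where
  "dimN q eps = (if eps > 0 then q + 1 else q)"

definition vecs :: "nat \<Rightarrow> (nat \<Rightarrow> real) set" where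
  "vecs N = {w. \<forall>i\<ge>N. w i = 0}"

definition Dg :: "(nat \<Rightarrow> real) \<Rightarrow> real \<Rightarrow> nat \<Rightarrow> real" where
  "Dg gam eps i = (if eps > 0 then (if i = 0 then 0 else gam i) else gam (i + 1))"

definition w0v :: "nat \<Rightarrow> (nat \<Rightarrow> real) \<Rightarrow> real \<Rightarrow> nat \<Rightarrow> real" where
  "w0v q del eps i = (if i < dimN q eps then
      (if eps > 0 then (if i = 0 then 0 else del i) else del (i + 1)) else 0)"

definition dv :: "real \<Rightarrow> nat \<Rightarrow> real" where
  "dv eps i = (if eps > 0 \<and> i = 0 then eps else 0)"

definition Qstar :: "nat \<Rightarrow> (nat \<Rightarrow> real) \<Rightarrow> real \<Rightarrow> real \<Rightarrow> (nat \<Rightarrow> real) \<Rightarrow> real" where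
  "Qstar q gam eps k w = (\<Sum>i<dimN q eps. Dg gam eps i * (w i)\<^sup>2)
      + 2 * (\<Sum>i<dimN q eps. dv eps i * w i) - k"

definition Lstar :: "nat \<Rightarrow> (nat \<Rightarrow> real) \<Rightarrow> real \<Rightarrow> (nat \<Rightarrow> real) \<Rightarrow> real" where
  "Lstar q del eps w = (\<Sum>i<dimN q eps. (w i - w0v q del eps i)\<^sup>2)"

definition Wset :: "nat \<Rightarrow> (nat \<Rightarrow> real) \<Rightarrow> real \<Rightarrow> real \<Rightarrow> (nat \<Rightarrow> real) set" where
  "Wset q gam eps k = {w \<in> vecs (dimN q eps). Qstar q gam eps k w = 0}"

definition Lunder :: "nat \<Rightarrow> (nat \<Rightarrow> real) \<Rightarrow> (nat \<Rightarrow> real) \<Rightarrow> real \<Rightarrow> real \<Rightarrow> real" where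
  "Lunder q gam del eps k = (INF w\<in>Wset q gam eps k. Lstar q del eps w)"

definition What :: "nat \<Rightarrow> (nat \<Rightarrow> real) \<Rightarrow> (nat \<Rightarrow> real) \<Rightarrow> real \<Rightarrow> real \<Rightarrow> (nat \<Rightarrow> real) set" where
  "What q gam del eps k = {w \<in> Wset q gam eps k. Lstar q del eps w = Lunder q gam del eps k}"

definition Lam :: "nat \<Rightarrow> (nat \<Rightarrow> real) \<Rightarrow> real set" where
  "Lam q gam = (if gam q > 0 then {..1 / gam 1} else {1 / gam q .. 1 / gam 1})"

definition WN :: "nat \<Rightarrow> (nat \<Rightarrow> real) \<Rightarrow> (nat \<Rightarrow> real) \<Rightarrow> real \<Rightarrow> real \<Rightarrow> (nat \<Rightarrow> real) set" where
  "WN q gam del eps lam = {w \<in> vecs (dimN q eps). \<forall>i<dimN q eps.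
      (1 - lam * Dg gam eps i) * w i = w0v q del eps i + lam * dv eps i}"

definition Wlam :: "nat \<Rightarrow> (nat \<Rightarrow> real) \<Rightarrow> (nat \<Rightarrow> real) \<Rightarrow> real \<Rightarrow> real \<Rightarrow> real \<Rightarrow> (nat \<Rightarrow> real) set" where
  "Wlam q gam del eps k lam = Wset q gam eps k \<inter> WN q gam del eps lam"

definition Happ :: "nat \<Rightarrow> (nat \<Rightarrow> real) \<Rightarrow> real \<Rightarrow> real \<Rightarrow> (nat \<Rightarrow> real) \<Rightarrow> nat \<Rightarrow> real" where
  "Happ q gam eps lam v i = (if i < dimN q eps then 2 * (1 - lam * Dg gam eps i) * v i else 0)"

end

theory Submission
  imports Defs
begin

lemma key_ident:
  assumes wN: "wN \<in> WN q gam del eps lam"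
    and Qw: "Qstar q gam eps k w = 0" and QN: "Qstar q gam eps k wN = 0"
  shows "Lstar q del eps w = Lstar q del eps wN
     + (\<Sum>i<dimN q eps. (1 - lam * Dg gam eps i) * (w i - wN i)\<^sup>2)"
proof -
  let ?N = "dimN q eps"
  have pt: "(w i - w0v q del eps i)\<^sup>2 - (wN i - w0v q del eps i)\<^sup>2
      - (1 - lam * Dg gam eps i) * (w i - wN i)\<^sup>2
      = lam * ((Dg gam eps i * (w i)\<^sup>2 + 2 * (dv eps i * w i))
             - (Dg gam eps i * (wN i)\<^sup>2 + 2 * (dv eps i * wN i)))" if "i < ?N" for i
  proof -
    have e: "w0v q del eps i = wN i - lam * (Dg gam eps i * wN i + dv eps i)"
      using wN that unfolding WN_def by (auto simp: algebra_simps)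
    show ?thesis unfolding e by (simp add: power2_eq_square algebra_simps)
  qed
  have "Lstar q del eps w - Lstar q del eps wN
      - (\<Sum>i<?N. (1 - lam * Dg gam eps i) * (w i - wN i)\<^sup>2)
      = (\<Sum>i<?N. (w i - w0v q del eps i)\<^sup>2 - (wN i - w0v q del eps i)\<^sup>2
      - (1 - lam * Dg gam eps i) * (w i - wN i)\<^sup>2)"
    unfolding Lstar_def by (simp add: sum_subtractf)
  also have "\<dots> = (\<Sum>i<?N. lam * ((Dg gam eps i * (w i)\<^sup>2 + 2 * (dv eps i * w i))
             - (Dg gam eps i * (wN i)\<^sup>2 + 2 * (dv eps i * wN i))))"
    by (rule sum.cong) (auto simp: pt)
  also have "\<dots> = lam * ((\<Sum>i<?N. Dg gam eps i * (w i)\<^sup>2 + 2 * (dv eps i * w i))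
      - (\<Sum>i<?N. Dg gam eps i * (wN i)\<^sup>2 + 2 * (dv eps i * wN i)))"
    by (simp add: sum_distrib_left sum_subtractf right_diff_distrib)
  also have "\<dots> = lam * (Qstar q gam eps k w - Qstar q gam eps k wN)"
    unfolding Qstar_def by (simp add: sum.distrib sum_distrib_left[symmetric])
  finally show ?thesis using Qw QN by simp
qed

theorem lemma8p1:
  fixes q :: nat and gam del :: "nat \<Rightarrow> real" and k eps lam :: real
  assumes "q \<ge> 1"
    and "\<And>i j. 1 \<le> i \<Longrightarrow> i < j \<Longrightarrow> j \<le> q \<Longrightarrow> gam i > gam j"
    and "\<And>i. 1 \<le> i \<Longrightarrow> i \<le> q \<Longrightarrow> gam i \<noteq> 0"
    and "gam 1 > 0"
    and "\<And>i. 1 \<le> i \<Longrightarrow> i \<le> q \<Longrightarrow> del i \<ge> 0"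
    and "eps \<ge> 0"
    and "Wset q gam eps k \<noteq> {}"
    and "lam \<in> Lam q gam"
  shows "(Wlam q gam del eps k lam \<noteq> {} \<longrightarrow> Wlam q gam del eps k lam = What q gam del eps k)
    \<and> (\<forall>wN \<in> Wlam q gam del eps k lam.
          Lunder q gam del eps k = Lstar q del eps wN
        \<and> What q gam del eps k =
            {w \<in> Wset q gam eps k. Happ q gam eps lam (\<lambda>i. w i - wN i) = (\<lambda>i. 0)}
        \<and> What q gam del eps k = Wlam q gam del eps k lam)
    \<and> (lam \<in> interior (Lam q gam) \<longrightarrow>
        (\<forall>wN \<in> Wlam q gam del eps k lam. What q gam del eps k = {wN}))"
proof -
  let ?N = "dimN q eps"
  let ?c = "\<lambda>i. 1 - lam * Dg gam eps i"
  have gi: "1 \<le> i \<Longrightarrow> i \<le> q \<Longrightarrow> gam q \<le> gam i \<and> gam i \<le> gam 1" for i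
    using assms(2)[of i q] assms(2)[of 1 i] by (cases "i = q"; cases "i = 1") auto
  have Dgr: "Dg gam eps i = 0 \<or> (\<exists>j. 1 \<le> j \<and> j \<le> q \<and> Dg gam eps i = gam j)" if "i < ?N" for i
  proof (cases "eps > 0")
    case True
    then show ?thesis using that unfolding Dg_def dimN_def
      by (cases "i = 0") (auto intro!: exI[of _ i])
  next
    case False
    then show ?thesis using that unfolding Dg_def dimN_def
      by (auto intro!: exI[of _ "i+1"])
  qed
  have cnn: "?c i \<ge> 0" if iN: "i < ?N" for i
  proof -
    consider "Dg gam eps i = 0" | j where "1 \<le> j" "j \<le> q" "Dg gam eps i = gam j"
      using Dgr[OF iN] by blast
    then show ?thesis
    proof cases
      case 2
      note g = gi[OF 2(1,2)]
      show ?thesis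
      proof (cases "gam q > 0")
        case True
        with assms(8) have l: "lam \<le> 1 / gam 1" by (simp add: Lam_def)
        have "lam * gam j \<le> 1"
        proof (cases "lam \<ge> 0")
          case True
          have "lam * gam j \<le> lam * gam 1" using g True by (simp add: mult_left_mono)
          also have "\<dots> \<le> 1" using l assms(4) by (simp add: pos_le_divide_eq mult.commute)
          finally show ?thesis .
        next
          case False then show ?thesis using g \<open>gam q > 0\<close>
            by (smt (verit) mult_neg_pos)
        qed
        then show ?thesis using 2 by simp
      next
        case False
        have gq: "gam q < 0" using False assms(1) assms(3)[of q] by auto
        with assms(8) have l: "1 / gam q \<le> lam" "lam \<le> 1 / gam 1" by (auto simp: Lam_def)
        have "lam * gam j \<le> 1"
        proof (cases "lam \<ge> 0")
          case True
          have "lam * gam j \<le> lam * gam 1" using g True by (simp add: mult_left_mono)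
          also have "\<dots> \<le> 1" using l assms(4) by (simp add: pos_le_divide_eq mult.commute)
          finally show ?thesis .
        next
          case False
          have "lam * gam j \<le> lam * gam q" using g False by (simp add: mult_left_mono_neg)
          also have "\<dots> \<le> 1" using l(1) gq by (simp add: neg_divide_le_eq mult.commute)
          finally show ?thesis .
        qed
        then show ?thesis using 2 by simp
      qed
    qed simp
  qed
  have cpos: "?c i > 0" if iN: "i < ?N" and iL: "lam \<in> interior (Lam q gam)" for i
  proof -
    consider "Dg gam eps i = 0" | j where "1 \<le> j" "j \<le> q" "Dg gam eps i = gam j"
      using Dgr[OF iN] by blast
    then show ?thesis
    proof cases
      case 2
      note g = gi[OF 2(1,2)]
      show ?thesis
      proof (cases "gam q > 0")
        case True
        with iL have l: "lam < 1 / gam 1" by (simp add: Lam_def)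
        have "lam * gam j < 1"
        proof (cases "lam \<ge> 0")
          case True
          have "lam * gam j \<le> lam * gam 1" using g True by (simp add: mult_left_mono)
          also have "\<dots> < 1" using l assms(4) by (simp add: pos_less_divide_eq mult.commute)
          finally show ?thesis .
        next
          case False then show ?thesis using g \<open>gam q > 0\<close>
            by (smt (verit) mult_neg_pos)
        qed
        then show ?thesis using 2 by simp
      next
        case False
        have gq: "gam q < 0" using False assms(1) assms(3)[of q] by auto
        with iL have l: "1 / gam q < lam" "lam < 1 / gam 1"
          by (auto simp: Lam_def interior_atLeastAtMost_real)
        have "lam * gam j < 1"
        proof (cases "lam \<ge> 0")
          case True
          have "lam * gam j \<le> lam * gam 1" using g True by (simp add: mult_left_mono)
          also have "\<dots> < 1" using l assms(4) by (simp add: pos_less_divide_eq mult.commute)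
          finally show ?thesis .
        next
          case False
          have "lam * gam j \<le> lam * gam q" using g False by (simp add: mult_left_mono_neg)
          also have "\<dots> < 1" using l(1) gq by (simp add: neg_divide_less_eq mult.commute)
          finally show ?thesis .
        qed
        then show ?thesis using 2 by simp
      qed
    qed simp
  qed
  have main: "Lunder q gam del eps k = Lstar q del eps wN
        \<and> What q gam del eps k =
            {w \<in> Wset q gam eps k. Happ q gam eps lam (\<lambda>i. w i - wN i) = (\<lambda>i. 0)}
        \<and> What q gam del eps k = Wlam q gam del eps k lam"
    if wNin: "wN \<in> Wlam q gam del eps k lam" for wN
  proof -
    have wNW: "wN \<in> Wset q gam eps k" and wNN: "wN \<in> WN q gam del eps lam"
      using wNin by (auto simp: Wlam_def)
    have QN: "Qstar q gam eps k wN = 0" using wNW by (simp add: Wset_def)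
    have id: "Lstar q del eps w = Lstar q del eps wN
     + (\<Sum>i<?N. ?c i * (w i - wN i)\<^sup>2)" if "w \<in> Wset q gam eps k" for w
      using key_ident[OF wNN _ QN] that by (simp add: Wset_def)
    have snn: "(\<Sum>i<?N. ?c i * (w i - wN i)\<^sup>2) \<ge> 0" for w
      by (rule sum_nonneg) (auto intro!: mult_nonneg_nonneg cnn)
    have ge: "Lstar q del eps wN \<le> Lstar q del eps w" if "w \<in> Wset q gam eps k" for w
      using id[OF that] snn[of w] by simp
    have LU: "Lunder q gam del eps k = Lstar q del eps wN"
      unfolding Lunder_def
    proof (rule antisym)
      show "(INF w\<in>Wset q gam eps k. Lstar q del eps w) \<le> Lstar q del eps wN"
        by (rule cINF_lower[OF _ wNW]) (rule bdd_belowI[where m = "Lstar q del eps wN"], auto intro: ge)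
      show "Lstar q del eps wN \<le> (INF w\<in>Wset q gam eps k. Lstar q del eps w)"
        using wNW by (intro cINF_greatest) (auto intro: ge)
    qed
    have sz: "(\<Sum>i<?N. ?c i * (w i - wN i)\<^sup>2) = 0 \<longleftrightarrow> (\<forall>i<?N. ?c i * (w i - wN i) = 0)" for w
    proof -
      have "(\<Sum>i<?N. ?c i * (w i - wN i)\<^sup>2) = 0 \<longleftrightarrow> (\<forall>i\<in>{..<?N}. ?c i * (w i - wN i)\<^sup>2 = 0)"
        by (rule sum_nonneg_eq_0_iff) (auto intro!: mult_nonneg_nonneg cnn)
      also have "\<dots> \<longleftrightarrow> (\<forall>i<?N. ?c i * (w i - wN i) = 0)"
        by (auto simp: power2_eq_square)
      finally show ?thesis .
    qed
    have Wh: "What q gam del eps k = {w \<in> Wset q gam eps k. \<forall>i<?N. ?c i * (w i - wN i) = 0}"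
    proof -
      have "Lstar q del eps w = Lstar q del eps wN \<longleftrightarrow> (\<forall>i<?N. ?c i * (w i - wN i) = 0)"
        if "w \<in> Wset q gam eps k" for w
      proof -
        have "Lstar q del eps w = Lstar q del eps wN \<longleftrightarrow> (\<Sum>i<?N. ?c i * (w i - wN i)\<^sup>2) = 0"
          using id[OF that] by linarith
        then show ?thesis using sz[of w] by blast
      qed
      then show ?thesis unfolding What_def LU by blast
    qed
    have H: "Happ q gam eps lam (\<lambda>i. w i - wN i) = (\<lambda>i. 0) \<longleftrightarrow> (\<forall>i<?N. ?c i * (w i - wN i) = 0)" for w
      unfolding Happ_def fun_eq_iff by auto
    have WL: "Wlam q gam del eps k lam = {w \<in> Wset q gam eps k. \<forall>i<?N. ?c i * (w i - wN i) = 0}"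
    proof -
      have "?c i * w i = w0v q del eps i + lam * dv eps i \<longleftrightarrow> ?c i * (w i - wN i) = 0"
        if "i < ?N" for i w
        using wNN that unfolding WN_def by (auto simp: algebra_simps)
      then show ?thesis unfolding Wlam_def WN_def Wset_def by auto
    qed
    have "{w \<in> Wset q gam eps k. Happ q gam eps lam (\<lambda>i. w i - wN i) = (\<lambda>i. 0)}
       = {w \<in> Wset q gam eps k. \<forall>i<?N. ?c i * (w i - wN i) = 0}"
      using H by blast
    then show ?thesis using LU Wh WL by simp
  qed
  have uniq: "What q gam del eps k = {wN}"
    if int: "lam \<in> interior (Lam q gam)" and wNin: "wN \<in> Wlam q gam del eps k lam" for wN
  proof -
    note mm = main[OF wNin]
    note m = conjunct2[OF conjunct2[OF mm]] conjunct1[OF conjunct2[OF mm]]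
    have wNv: "wN \<in> vecs ?N" using wNin by (auto simp: Wlam_def Wset_def)
    have "w = wN" if "w \<in> What q gam del eps k" for w
    proof
      fix i
      have wv: "w \<in> vecs ?N" using that by (auto simp: What_def Wset_def)
      have "w \<in> {w \<in> Wset q gam eps k. Happ q gam eps lam (\<lambda>i. w i - wN i) = (\<lambda>i. 0)}"
        using that m(2) by (simp only:)
      then have hz: "Happ q gam eps lam (\<lambda>i. w i - wN i) i = 0" by simp
      show "w i = wN i"
      proof (cases "i < ?N")
        case True
        then show ?thesis using hz cpos[OF True int] by (auto simp: Happ_def)
      next
        case False then show ?thesis using wv wNv by (auto simp: vecs_def)
      qed
    qed
    moreover have "wN \<in> What q gam del eps k" using m(1) wNin by (simp only:)
    ultimately show ?thesis by blast
  qed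
  show ?thesis using main uniq by blast
qed

end
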